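(* Let $\mathbb{K}$ be a field of characteristic zero, let $p,q\in\mathbb{Z}^n_{\ge0}$ be nonzero vectors and let $\beta,\gamma\in\mathbb{K}^n$ be non-proportional vectors. If the derivations $\Delta^p_\beta$ and $\Delta^q_\gamma$ of $\mathbb{K}[x_1,\ldots,x_n]$ generate a finite dimensional Lie algebra, then there exists $r\in\mathbb{Z}_{\ge0}$ such that $\langle\beta,rp+q\rangle=0$.
   Context: For $p\in\mathbb{Z}^n_{\ge0}$ and $\beta\in\mathbb{K}^n$, $\Delta^p_\beta:=x_1^{p_1}\cdots x_n^{p_n}\sum_{j=1}^n\beta_jx_j\partial_j$, where $\partial_j=\partial/\partial x_j$. $\langle\beta,u\rangle:=\sum_i\beta_iu_i$. The Lie bracket is the commutator of derivations. *)

theory Defs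
  imports Main "HOL-Library.Poly_Mapping"
begin

text \<open>Polynomial ring K[x_j : j in 'n], with 'n a finite index type (n = CARD('n)).
Monomials are finitely supported exponent vectors, polynomials are finitely supported
coefficient maps (convolution product from HOL-Library.Poly_Mapping).\<close>

type_synonym ('n, 'a) mpoly = "('n \<Rightarrow>\<^sub>0 nat) \<Rightarrow>\<^sub>0 'a"

definition pconst :: "'a::zero \<Rightarrow> ('n, 'a) mpoly" where
  "pconst c = Poly_Mapping.single 0 c"

definition pvar :: "'n \<Rightarrow> ('n, 'a::{zero,one}) mpoly" where
  "pvar j = Poly_Mapping.single (Poly_Mapping.single j 1) 1"

definition pmonom :: "('n \<Rightarrow>\<^sub>0 nat) \<Rightarrow> ('n, 'a::{zero,one}) mpoly" where
  "pmonom u = Poly_Mapping.single u 1"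

definition psmult :: "'a::semiring_0 \<Rightarrow> ('n, 'a) mpoly \<Rightarrow> ('n, 'a) mpoly" where
  "psmult c f = Poly_Mapping.map (\<lambda>a. c * a) f"

definition pderiv_var :: "'n \<Rightarrow> ('n, 'a::comm_semiring_1) mpoly \<Rightarrow> ('n, 'a) mpoly" where
  "pderiv_var j f = (\<Sum>u\<in>Poly_Mapping.keys f.
      Poly_Mapping.single (u - Poly_Mapping.single j (1::nat))
        (of_nat (Poly_Mapping.lookup u j) * Poly_Mapping.lookup f u))"

definition Delta :: "('n::finite \<Rightarrow>\<^sub>0 nat) \<Rightarrow> ('n \<Rightarrow> 'a::comm_semiring_1)
    \<Rightarrow> ('n, 'a) mpoly \<Rightarrow> ('n, 'a) mpoly" where
  "Delta p \<beta> f = pmonom p * (\<Sum>j\<in>UNIV. psmult (\<beta> j) (pvar j * pderiv_var j f))"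

definition lie_bracket :: "('b \<Rightarrow> 'b::ab_group_add) \<Rightarrow> ('b \<Rightarrow> 'b) \<Rightarrow> 'b \<Rightarrow> 'b" where
  "lie_bracket D E = (\<lambda>f. D (E f) - E (D f))"

inductive_set lie_gen :: "(('n, 'a::field) mpoly \<Rightarrow> ('n, 'a) mpoly) set
    \<Rightarrow> (('n, 'a) mpoly \<Rightarrow> ('n, 'a) mpoly) set" for G where
  gen: "D \<in> G \<Longrightarrow> D \<in> lie_gen G"
| zero: "(\<lambda>f. 0) \<in> lie_gen G"
| add: "D \<in> lie_gen G \<Longrightarrow> E \<in> lie_gen G \<Longrightarrow> (\<lambda>f. D f + E f) \<in> lie_gen G"
| smult: "D \<in> lie_gen G \<Longrightarrow> (\<lambda>f. psmult c (D f)) \<in> lie_gen G"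
| bracket: "D \<in> lie_gen G \<Longrightarrow> E \<in> lie_gen G \<Longrightarrow> lie_bracket D E \<in> lie_gen G"

definition fin_dim_ops :: "(('n, 'a::field) mpoly \<Rightarrow> ('n, 'a) mpoly) set \<Rightarrow> bool" where
  "fin_dim_ops L \<longleftrightarrow> (\<exists>B. finite B \<and>
     (\<forall>D\<in>L. \<exists>c. D = (\<lambda>f. \<Sum>b\<in>B. psmult (c b) (b f))))"

end

theory Submission
  imports Defs
begin

definition ip :: "('n::finite \<Rightarrow> 'a::comm_semiring_1) \<Rightarrow> ('n \<Rightarrow>\<^sub>0 nat) \<Rightarrow> 'a" where
  "ip v u = (\<Sum>j\<in>UNIV. v j * of_nat (Poly_Mapping.lookup u j))"

lemma ip_add: "ip v (a + b) = ip v a + ip v b"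
  by (simp add: ip_def lookup_add distrib_left sum.distrib)

lemma ip_lin: "ip (\<lambda>j. a * v j - b * w j) u = a * ip v u - b * (ip w (u::'n::finite \<Rightarrow>\<^sub>0 nat) :: 'a::comm_ring_1)"
  by (simp add: ip_def sum_subtractf sum_distrib_left left_diff_distrib mult.assoc)

lemma ip_single: "ip v (Poly_Mapping.single j 1) = v j"
proof -
  have "ip v (Poly_Mapping.single j 1) = (\<Sum>i\<in>UNIV. if i = j then v j else 0)"
    unfolding ip_def by (rule sum.cong) (auto simp: lookup_single when_def)
  then show ?thesis by simp
qed

lemma lookup_psmult: "Poly_Mapping.lookup (psmult c g) v = c * Poly_Mapping.lookup g v"
  by (simp add: psmult_def map.rep_eq when_def)

lemma sum_single: "(\<Sum>j\<in>A. Poly_Mapping.single u (f j)) = Poly_Mapping.single u (sum f A)"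
  by (rule poly_mapping_eqI) (simp add: lookup_sum lookup_single when_def)

lemma pvar_pderiv_single:
  "pvar j * pderiv_var j (Poly_Mapping.single u c) =
     Poly_Mapping.single u (of_nat (Poly_Mapping.lookup u j) * (c::'a::comm_semiring_1))"
proof (cases "c = 0")
  case True
  then show ?thesis by (simp add: pderiv_var_def)
next
  case False
  then have "pderiv_var j (Poly_Mapping.single u c) =
     Poly_Mapping.single (u - Poly_Mapping.single j 1) (of_nat (Poly_Mapping.lookup u j) * c)"
    by (simp add: pderiv_var_def)
  then have e: "pvar j * pderiv_var j (Poly_Mapping.single u c) =
     Poly_Mapping.single (Poly_Mapping.single j 1 + (u - Poly_Mapping.single j 1)) (of_nat (Poly_Mapping.lookup u j) * c)"
    by (simp add: pvar_def mult_single)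
  show ?thesis
  proof (cases "Poly_Mapping.lookup u j = 0")
    case True
    then show ?thesis using e by simp
  next
    case False
    have "Poly_Mapping.single j 1 + (u - Poly_Mapping.single j 1) = u"
      by (rule poly_mapping_eqI) (use False in \<open>auto simp: lookup_add lookup_minus lookup_single when_def\<close>)
    then show ?thesis using e by simp
  qed
qed

lemma Delta_single:
  "Delta p \<beta> (Poly_Mapping.single u c) = Poly_Mapping.single (p + u) (ip \<beta> u * c)"
proof -
  have "(\<Sum>j\<in>UNIV. psmult (\<beta> j) (pvar j * pderiv_var j (Poly_Mapping.single u c)))
      = (\<Sum>j\<in>UNIV. Poly_Mapping.single u (\<beta> j * (of_nat (Poly_Mapping.lookup u j) * c)))"
    by (simp add: pvar_pderiv_single psmult_def)
  also have "\<dots> = Poly_Mapping.single u (ip \<beta> u * c)"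
    by (simp add: sum_single ip_def sum_distrib_right mult.assoc)
  finally show ?thesis
    by (simp add: Delta_def pmonom_def mult_single)
qed

primrec wv :: "('n \<Rightarrow>\<^sub>0 nat) \<Rightarrow> ('n \<Rightarrow>\<^sub>0 nat) \<Rightarrow> nat \<Rightarrow> ('n \<Rightarrow>\<^sub>0 nat)" where
  "wv p q 0 = q"
| "wv p q (Suc k) = wv p q k + p"

lemma lookup_wv: "Poly_Mapping.lookup (wv p q k) j = k * Poly_Mapping.lookup p j + Poly_Mapping.lookup q j"
  by (induct k) (simp_all add: lookup_add)

primrec dl :: "('n::finite \<Rightarrow>\<^sub>0 nat) \<Rightarrow> ('n \<Rightarrow>\<^sub>0 nat) \<Rightarrow> ('n \<Rightarrow> 'a::comm_ring_1) \<Rightarrow> ('n \<Rightarrow> 'a) \<Rightarrow> nat \<Rightarrow> 'n \<Rightarrow> 'a" where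
  "dl p q \<beta> \<gamma> 0 = \<gamma>"
| "dl p q \<beta> \<gamma> (Suc k) = (\<lambda>j. ip \<beta> (wv p q k) * dl p q \<beta> \<gamma> k j - ip (dl p q \<beta> \<gamma> k) p * \<beta> j)"

primrec Dk :: "('n::finite \<Rightarrow>\<^sub>0 nat) \<Rightarrow> ('n \<Rightarrow>\<^sub>0 nat) \<Rightarrow> ('n \<Rightarrow> 'a::field) \<Rightarrow> ('n \<Rightarrow> 'a) \<Rightarrow> nat
    \<Rightarrow> ('n, 'a) mpoly \<Rightarrow> ('n, 'a) mpoly" where
  "Dk p q \<beta> \<gamma> 0 = Delta q \<gamma>"
| "Dk p q \<beta> \<gamma> (Suc k) = lie_bracket (Delta p \<beta>) (Dk p q \<beta> \<gamma> k)"

lemma Dk_gen: "Dk p q \<beta> \<gamma> k \<in> lie_gen {Delta p \<beta>, Delta q \<gamma>}"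
  by (induct k) (auto intro: lie_gen.intros)

lemma Dk_single:
  "Dk p q \<beta> \<gamma> k (Poly_Mapping.single u c) =
     Poly_Mapping.single (u + wv p q k) (ip (dl p q \<beta> \<gamma> k) u * c)"
proof (induct k arbitrary: u c)
  case 0
  then show ?case by (simp add: Delta_single add.commute)
next
  case (Suc k)
  let ?w = "wv p q k" and ?d = "dl p q \<beta> \<gamma> k"
  have k1: "p + (u + ?w) = u + wv p q (Suc k)" and k2: "p + u + ?w = u + wv p q (Suc k)"
    by (simp_all add: add_ac)
  have "Dk p q \<beta> \<gamma> (Suc k) (Poly_Mapping.single u c) =
     Poly_Mapping.single (u + wv p q (Suc k)) (ip \<beta> (u + ?w) * (ip ?d u * c))
     - Poly_Mapping.single (u + wv p q (Suc k)) (ip ?d (p + u) * (ip \<beta> u * c))"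
    by (simp add: lie_bracket_def Suc Delta_single k1 k2)
  also have "\<dots> = Poly_Mapping.single (u + wv p q (Suc k))
      (ip \<beta> (u + ?w) * (ip ?d u * c) - ip ?d (p + u) * (ip \<beta> u * c))"
    by (simp add: single_diff)
  also have "ip \<beta> (u + ?w) * (ip ?d u * c) - ip ?d (p + u) * (ip \<beta> u * c)
      = ip (dl p q \<beta> \<gamma> (Suc k)) u * c"
  proof -
    have e: "ip (dl p q \<beta> \<gamma> (Suc k)) u = ip \<beta> ?w * ip ?d u - ip ?d p * ip \<beta> u"
      using ip_lin[of "ip \<beta> ?w" ?d "ip ?d p" \<beta> u] by simp
    show ?thesis unfolding e by (simp add: ip_add algebra_simps)
  qed
  finally show ?case .
qed

lemma dl_form:
  assumes H: "\<And>r. ip \<beta> (wv p q r) \<noteq> (0::'a::field)"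
  shows "\<exists>a b. a \<noteq> 0 \<and> (\<forall>j. dl p q \<beta> \<gamma> k j = a * \<gamma> j + b * \<beta> j)"
proof (induct k)
  case 0
  show ?case by (rule exI[of _ 1], rule exI[of _ 0]) simp
next
  case (Suc k)
  then obtain a b where ab: "a \<noteq> 0" "\<forall>j. dl p q \<beta> \<gamma> k j = a * \<gamma> j + b * \<beta> j" by blast
  show ?case
    apply (rule exI[of _ "ip \<beta> (wv p q k) * a"])
    apply (rule exI[of _ "ip \<beta> (wv p q k) * b - ip (dl p q \<beta> \<gamma> k) p"])
    using ab H[of k] by (simp add: algebra_simps)
qed

theorem lemma5:
  fixes p q :: "'n::finite \<Rightarrow>\<^sub>0 nat" and \<beta> \<gamma> :: "'n \<Rightarrow> 'a::field_char_0"
  assumes "p \<noteq> 0" and "q \<noteq> 0"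
    and nonprop: "\<forall>a b. (\<forall>j. a * \<beta> j + b * \<gamma> j = 0) \<longrightarrow> a = 0 \<and> b = 0"
    and "fin_dim_ops (lie_gen {Delta p \<beta>, Delta q \<gamma>})"
  shows "\<exists>r::nat. (\<Sum>j\<in>UNIV. \<beta> j * of_nat (r * Poly_Mapping.lookup p j + Poly_Mapping.lookup q j)) = 0"
proof (rule ccontr)
  assume "\<not> ?thesis"
  then have H: "\<And>r. ip \<beta> (wv p q r) \<noteq> 0"
    by (auto simp: ip_def lookup_wv)
  obtain B where B: "finite B"
    "\<forall>D\<in>lie_gen {Delta p \<beta>, Delta q \<gamma>}. \<exists>c. D = (\<lambda>f. \<Sum>b\<in>B. psmult (c b) (b f))"
    using assms(4) unfolding fin_dim_ops_def by blast
  define S where "S = (\<Union>j\<in>UNIV. \<Union>b\<in>B. Poly_Mapping.keys (b (Poly_Mapping.single (Poly_Mapping.single j 1) (1::'a))))"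
  have finS: "finite S" unfolding S_def using B(1) by simp
  define T where "T = (\<Union>j\<in>UNIV. (\<lambda>s. s - Poly_Mapping.single j (1::nat)) ` S)"
  have finT: "finite T" unfolding T_def using finS by simp
  have inT: "wv p q k \<in> T" for k
  proof -
    obtain a b where ab: "a \<noteq> 0" "\<forall>j. dl p q \<beta> \<gamma> k j = a * \<gamma> j + b * \<beta> j"
      using dl_form[OF H] by blast
    have "\<exists>j. dl p q \<beta> \<gamma> k j \<noteq> 0"
    proof (rule ccontr)
      assume "\<not> (\<exists>j. dl p q \<beta> \<gamma> k j \<noteq> 0)"
      then have "\<forall>j. b * \<beta> j + a * \<gamma> j = 0" using ab(2) by (simp add: add.commute)
      then show False using nonprop ab(1) by blast
    qed
    then obtain j where j: "dl p q \<beta> \<gamma> k j \<noteq> 0" by blast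
    let ?f = "Poly_Mapping.single (Poly_Mapping.single j 1) (1::'a)"
    let ?v = "Poly_Mapping.single j 1 + wv p q k"
    have val: "Dk p q \<beta> \<gamma> k ?f = Poly_Mapping.single ?v (dl p q \<beta> \<gamma> k j)"
      by (simp only: Dk_single ip_single mult_1_right)
    obtain c where c: "Dk p q \<beta> \<gamma> k = (\<lambda>f. \<Sum>b\<in>B. psmult (c b) (b f))"
      using B(2) Dk_gen by blast
    have "Poly_Mapping.lookup (Dk p q \<beta> \<gamma> k ?f) ?v \<noteq> 0" using val j by simp
    then have "(\<Sum>b\<in>B. c b * Poly_Mapping.lookup (b ?f) ?v) \<noteq> 0"
      by (simp add: c lookup_sum lookup_psmult)
    then obtain b where "b \<in> B" "Poly_Mapping.lookup (b ?f) ?v \<noteq> 0"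
      by (metis (no_types, lifting) mult_zero_right sum.neutral)
    then have "?v \<in> S" unfolding S_def by (auto simp: in_keys_iff)
    moreover have "?v - Poly_Mapping.single j 1 = wv p q k"
      by (rule poly_mapping_eqI) (simp add: lookup_add lookup_minus)
    ultimately have "wv p q k \<in> (\<lambda>s. s - Poly_Mapping.single j (1::nat)) ` S"
      by (metis rev_image_eqI)
    then show ?thesis unfolding T_def by blast
  qed
  obtain j0 where j0: "Poly_Mapping.lookup p j0 \<noteq> 0"
    using assms(1) by (metis poly_mapping_eqI lookup_zero)
  have "inj (wv p q)"
  proof (rule injI)
    fix k1 k2 assume "wv p q k1 = wv p q k2"
    then have "Poly_Mapping.lookup (wv p q k1) j0 = Poly_Mapping.lookup (wv p q k2) j0" by simp
    then show "k1 = k2" using j0 by (simp add: lookup_wv)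
  qed
  moreover have "finite (range (wv p q))" using finT inT by (meson finite_subset image_subsetI)
  ultimately show False using finite_imageD by blast
qed

end
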